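(* Let $K$ be a field of characteristic $0$ and let $f(x)\in K[x,x^{-1}]$ be a non-constant Laurent polynomial. Then there exists a positive integer $N$ such that every element $c\in K$ can be written as $c=\epsilon_1 f(a_1)+\cdots+\epsilon_N f(a_N)$ with $a_1,\dots,a_N\in K^*$ and $\epsilon_1,\dots,\epsilon_N\in\{1,-1\}$. In particular, for $K=\mathbb{Q}$, $f$ satisfies the EWP.
   Context: A rational function $f\in\mathbb{Q}(x)$ satisfies the EWP if for some $N\ge1$ every rational number can be written as $\epsilon_1f(a_1)+\cdots+\epsilon_Nf(a_N)$ with $\epsilon_i\in\{1,-1\}$ and $a_i\in\mathbb{Q}$ not poles of $f$. *)

theory Defs
  imports Main
begin

text \<open>A Laurent polynomial f(x) in K[x,x^-1] is represented by its finitely supported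
  coefficient function c :: int => K, i.e. f(x) = sum over n of c n * x^n (n in Z).\<close>

definition laurent_poly :: "(int \<Rightarrow> 'a::zero) \<Rightarrow> bool" where
  "laurent_poly c \<longleftrightarrow> finite {n. c n \<noteq> 0}"

definition laurent_eval :: "(int \<Rightarrow> 'a::field) \<Rightarrow> 'a \<Rightarrow> 'a" where
  "laurent_eval c x = (\<Sum>n\<in>{n. c n \<noteq> 0}. c n * x powi n)"

definition laurent_nonconst :: "(int \<Rightarrow> 'a::zero) \<Rightarrow> bool" where
  "laurent_nonconst c \<longleftrightarrow> (\<exists>n. n \<noteq> 0 \<and> c n \<noteq> 0)"

end

theory Submission
  imports Defs "HOL-Computational_Algebra.Polynomial"
begin


definition combA :: "('a::field \<times> 'a) list \<Rightarrow> ('a \<Rightarrow> 'a) \<Rightarrow> 'a \<Rightarrow> 'a" where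
 "combA L h x = sum_list (map (\<lambda>(e,l). e * h (l*x)) L)"
definition coefA :: "('a::field \<times> 'a) list \<Rightarrow> int \<Rightarrow> 'a" where
 "coefA L k = sum_list (map (\<lambda>(e,l). e * l powi k) L)"
definition compA :: "('a::field \<times> 'a) list \<Rightarrow> ('a \<times> 'a) list \<Rightarrow> ('a \<times> 'a) list" where
 "compA L1 L2 = concat (map (\<lambda>(e1,l1). map (\<lambda>(e2,l2). (e1*e2, l1*l2)) L2) L1)"

lemma coefA_aux: "(\<Sum>x\<leftarrow>L2. a * (fst x * (b * snd x) powi k)) = (a::'a::field) * (b powi k * (\<Sum>x\<leftarrow>L2. fst x * snd x powi k))"
  by (induction L2) (auto simp: power_int_mult_distrib algebra_simps)

lemma coefA_comp: "coefA (compA L1 L2) k = coefA L1 k * coefA L2 k"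
  unfolding coefA_def compA_def
  by (induction L1) (auto simp: o_def case_prod_unfold coefA_aux algebra_simps)

lemma compA_set: "(e,l) \<in> set (compA L1 L2) \<Longrightarrow> \<exists>e1 l1 e2 l2. (e1,l1) \<in> set L1 \<and> (e2,l2) \<in> set L2 \<and> e = e1*e2 \<and> l = l1*l2"
  unfolding compA_def by auto

lemma combA_laurent:
  "combA L (laurent_eval c) x = (\<Sum>n\<in>{n. c n \<noteq> 0}. c n * coefA L n * x powi n)"
proof (induction L)
  case Nil
  then show ?case by (simp add: combA_def coefA_def)
next
  case (Cons p L)
  obtain e l where p: "p = (e,l)" by (cases p)
  have "combA (p#L) (laurent_eval c) x = e * laurent_eval c (l*x) + combA L (laurent_eval c) x"
    by (simp add: combA_def p)
  also have "e * laurent_eval c (l*x) = (\<Sum>n\<in>{n. c n \<noteq> 0}. c n * (e * l powi n) * x powi n)"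
    by (simp add: laurent_eval_def sum_distrib_left power_int_mult_distrib algebra_simps)
  finally show ?case using Cons by (simp add: coefA_def p sum.distrib[symmetric] algebra_simps)
qed

lemma two_powi_inj: "(2::'a::field_char_0) powi a = 2 powi b \<Longrightarrow> a = b"
proof -
  have main: "(2::'a) powi a = 2 powi b \<Longrightarrow> a \<le> b \<Longrightarrow> a = b" for a b
  proof -
    assume h: "(2::'a) powi a = 2 powi b" and ab: "a \<le> b"
    obtain m where m: "b = a + int m" using ab zle_iff_zadd by blast
    have "(2::'a) powi b = 2 powi a * 2 powi (int m)" using m by (simp add: power_int_add)
    with h have "(2::'a) ^ m = 1" by simp
    hence "(of_nat (2^m)::'a) = of_nat 1" by simp
    hence "(2::nat)^m = 1" using of_nat_eq_iff by blast
    hence "m = 0" by simp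
    thus "a = b" using m by simp
  qed
  assume "(2::'a) powi a = 2 powi b"
  thus "a = b" using main[of a b] main[of b a] by (cases "a \<le> b") auto
qed

definition killL :: "int \<Rightarrow> ('a::field \<times> 'a) list" where
 "killL n = (1, (2::'a) powi (if n \<ge> 0 then 1 else -1)) # replicate (2 ^ nat \<bar>n\<bar>) (-1, 1)"

lemma coef_kill: "coefA (killL n) k = (2::'a::field_char_0) powi ((if n\<ge>0 then 1 else -1) * k) - 2 powi ((if n \<ge> 0 then 1 else -1)*n)"
proof -
  have a: "(2::'a) powi ((if n\<ge>0 then 1 else -1)*n) = of_nat (2 ^ nat \<bar>n\<bar>)"
  proof -
    have h: "(if n\<ge>0 then 1 else -1)*n = int (nat \<bar>n\<bar>)" by auto
    show ?thesis unfolding h power_int_of_nat by simp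
  qed
  show ?thesis unfolding coefA_def killL_def a
    by (simp add: sum_list_replicate power_int_mult del: of_nat_power)
qed

lemma coef_kill_zero: "coefA (killL n) k = (0::'a::field_char_0) \<longleftrightarrow> k = n"
proof -
  have "(2::'a) powi ((if n\<ge>0 then 1 else -1) * k) = 2 powi ((if n \<ge> 0 then 1 else -1)*n) \<longleftrightarrow> k = n"
  proof
    assume "(2::'a) powi ((if n\<ge>0 then 1 else -1) * k) = 2 powi ((if n \<ge> 0 then 1 else -1)*n)"
    hence "(if n\<ge>0 then 1 else -1) * k = (if n \<ge> 0 then 1 else -1)*n" by (rule two_powi_inj)
    thus "k = n" by (cases "n \<ge> 0") auto
  qed simp
  thus ?thesis by (simp add: coef_kill)
qed

lemma killL_set: "(e,l) \<in> set (killL n) \<Longrightarrow> (e = 1 \<or> e = -1) \<and> l \<noteq> (0::'a::field_char_0)"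
  unfolding killL_def by (auto split: if_splits)

lemma exists_L:
  assumes "finite S"
  shows "\<exists>L::('a::field_char_0 \<times> 'a) list. (\<forall>(e,l)\<in>set L. (e=1 \<or> e=-1) \<and> l \<noteq> 0) \<and>
     (\<forall>k\<in>S. coefA L k = 0) \<and> (\<forall>k. k \<notin> S \<longrightarrow> coefA L k \<noteq> 0)"
  using assms
proof (induction S rule: finite_induct)
  case empty
  show ?case by (rule exI[of _ "[(1,1)]"]) (simp add: coefA_def)
next
  case (insert n S)
  then obtain L::"('a \<times> 'a) list" where L: "\<forall>(e,l)\<in>set L. (e=1 \<or> e=-1) \<and> l \<noteq> 0"
     "\<forall>k\<in>S. coefA L k = 0" "\<forall>k. k \<notin> S \<longrightarrow> coefA L k \<noteq> 0" by blast
  show ?case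
  proof (rule exI[of _ "compA (killL n) L"], intro conjI)
    show "\<forall>(e,l)\<in>set (compA (killL n) L). (e=1 \<or> e=-1) \<and> l \<noteq> 0"
      using L(1) by (auto dest!: compA_set killL_set)
    show "\<forall>k\<in>insert n S. coefA (compA (killL n) L) k = 0"
      using L(2) by (auto simp: coefA_comp coef_kill_zero)
    show "\<forall>k. k \<notin> insert n S \<longrightarrow> coefA (compA (killL n) L) k \<noteq> 0"
      using L(3) by (auto simp: coefA_comp coef_kill_zero)
  qed
qed



definition combB :: "('a::field \<times> 'a) list \<Rightarrow> ('a \<Rightarrow> 'a) \<Rightarrow> 'a \<Rightarrow> 'a" where
 "combB M h x = sum_list (map (\<lambda>(e,b). e * h (x+b)) M)"
definition diffL :: "('a::field \<times> 'a) list \<Rightarrow> ('a \<times> 'a) list" where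
 "diffL M = concat (map (\<lambda>(e,b). [(e,b+1),(-e,b)]) M)"

lemma combB_diff: "combB (diffL M) h x = combB M (\<lambda>z. h(z+1) - h z) x"
  unfolding combB_def diffL_def
  by (induction M) (auto simp: algebra_simps)

lemma diffL_set: "(e,b) \<in> set (diffL M) \<Longrightarrow> \<exists>b'. (e,b') \<in> set M \<or> (-e,b') \<in> set M"
  unfolding diffL_def by auto

lemma diffL_sign: "\<forall>(e,b)\<in>set M. e=1 \<or> e=(-1::'a::field) \<Longrightarrow> \<forall>(e,b)\<in>set (diffL M). e=1 \<or> e=-1"
  unfolding diffL_def by (induction M) auto

lemma poly_deg1: "degree (p::'a::field poly) = 1 \<Longrightarrow> poly p x = coeff p 0 + coeff p 1 * x"
  by (simp add: poly_altdef)

lemma poly_deg0: "degree (p::'a::field poly) = 0 \<Longrightarrow> poly p x = coeff p 0"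
  by (simp add: poly_altdef)

lemma exists_M:
  fixes p :: "'a::field_char_0 poly"
  shows "degree p \<ge> 1 \<Longrightarrow> \<exists>M. (\<forall>(e,b)\<in>set M. e=1 \<or> e=-1) \<and> (\<exists>a b. a\<noteq>0 \<and> (\<forall>x. combB M (poly p) x = a*x+b))"
proof (induction "degree p" arbitrary: p rule: less_induct)
  case less
  show ?case
  proof (cases "degree p = 1")
    case True
    have "p \<noteq> 0" using True by auto
    hence "coeff p 1 \<noteq> 0" using True by (metis leading_coeff_neq_0)
    moreover have "\<forall>x. combB [(1,0)] (poly p) x = coeff p 1 * x + coeff p 0"
      using True by (simp add: combB_def poly_deg1)
    ultimately show ?thesis by (intro exI[of _ "[(1,0)]"]) auto
  next
    case False
    with less.prems have d2: "degree p \<ge> 2" by simp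
    define q where "q = pcompose p [:1,1:] - p"
    have pq: "poly q x = poly p (x+1) - poly p x" for x
      by (simp add: q_def poly_pcompose algebra_simps)
    have dc: "degree (pcompose p [:1,1:]) = degree p" by (simp add: degree_pcompose)
    have lc: "coeff (pcompose p [:1,1:]) (degree p) = coeff p (degree p)"
      using lead_coeff_comp[of "[:1,1:]" p] dc by simp
    have cq: "coeff q (degree p) = 0" by (simp add: q_def lc)
    have dle: "degree q \<le> degree p" unfolding q_def using degree_diff_le[of "pcompose p [:1,1:]" "degree p" p] dc by simp
    have dlt: "degree q < degree p"
    proof (rule ccontr)
      assume "\<not> degree q < degree p"
      hence "degree q = degree p" using dle by simp
      hence "q = 0" using cq by (metis leading_coeff_0_iff)
      hence "degree q = 0" by simp
      thus False using \<open>degree q = degree p\<close> d2 by simp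
    qed
    have dq1: "degree q \<ge> 1"
    proof (rule ccontr)
      assume "\<not> degree q \<ge> 1"
      hence "degree q = 0" by simp
      hence qk: "poly q x = coeff q 0" for x using poly_deg0 by blast
      define k where "k = coeff q 0"
      have pn: "poly p (of_nat n) = poly p 0 + of_nat n * k" for n
      proof (induction n)
        case (Suc n)
        have "poly p (of_nat (Suc n)) = poly p (of_nat n + 1)" by (simp add: add.commute)
        also have "\<dots> = poly p (of_nat n) + k" using pq[of "of_nat n"] qk[of "of_nat n"] k_def by simp
        finally show ?case using Suc by (simp add: algebra_simps)
      qed simp
      obtain c0 where c0: "c0 = poly p 0" by blast
      define r where "r = p - [:c0, k:]"
      have "range (of_nat :: nat \<Rightarrow> 'a) \<subseteq> {x. poly r x = 0}"
      proof clarify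
        fix n
        have "poly r (of_nat n) = poly p (of_nat n) - (c0 + of_nat n * k)"
          unfolding r_def poly_diff poly_pCons poly_0 by (simp add: algebra_simps)
        also have "\<dots> = 0" using pn[of n] c0 by simp
        finally show "poly r (of_nat n) = 0" .
      qed
      moreover have "infinite (range (of_nat :: nat \<Rightarrow> 'a))"
        by (rule range_inj_infinite) (rule inj_of_nat)
      ultimately have "infinite {x. poly r x = 0}" using finite_subset by blast
      hence "r = 0" using poly_roots_finite by blast
      hence "p = [:c0, k:]" by (simp add: r_def)
      moreover have "degree [:c0, k:] \<le> 1" by (rule order_trans[OF degree_pCons_le]) simp
      ultimately have "degree p \<le> 1" by simp
      thus False using d2 by simp
    qed
    from less.hyps[OF dlt dq1] obtain M a b where M: "\<forall>(e,b)\<in>set M. e=1 \<or> e=-1" "a\<noteq>0" "\<forall>x. combB M (poly q) x = a*x+b"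
      by blast
    show ?thesis
    proof (intro exI conjI)
      show "\<forall>(e,b)\<in>set (diffL M). e=1 \<or> e=-1" using M(1) by (rule diffL_sign)
      have "(\<lambda>z. poly p (z+1) - poly p z) = poly q" using pq by auto
      thus "\<forall>x. combB (diffL M) (poly p) x = a*x+b" using M(3) by (simp add: combB_diff)
    qed (rule M(2))
  qed
qed


definition PL :: "('a::field \<times> 'a) list \<Rightarrow> ('a \<times> 'a) list \<Rightarrow> 'a \<Rightarrow> ('a \<times> 'a) list" where
  "PL M L x = concat (map (\<lambda>(e,b). map (\<lambda>(e',l). (e*e', l*(x+b))) L) M)"

lemma expand_aux: "e * combA L f z = sum_list (map (\<lambda>(\<epsilon>,t). \<epsilon> * f t) (map (\<lambda>(e',l). (e*e', l*z)) L))"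
  unfolding combA_def by (induction L) (auto simp: algebra_simps)

lemma expand: "combB M (combA L f) x = sum_list (map (\<lambda>(\<epsilon>,t). \<epsilon> * f t) (PL M L x))"
  unfolding PL_def by (induction M) (auto simp: combB_def expand_aux)

lemma PL_length: "length (PL M L x) = length M * length L"
  unfolding PL_def by (induction M) auto

lemma PL_set:
  assumes "\<forall>(e,b)\<in>set M. e=1 \<or> e=-1" "\<forall>(e,l)\<in>set L. (e=1 \<or> e=-1) \<and> l \<noteq> 0"
    "\<forall>(e,b)\<in>set M. x + b \<noteq> 0"
  shows "\<forall>(\<epsilon>,t)\<in>set (PL M L x). (\<epsilon>=1 \<or> \<epsilon>=-1) \<and> t \<noteq> (0::'a::field)"
  using assms unfolding PL_def by fastforce

lemma neg_sum: "sum_list (map (\<lambda>(\<epsilon>,t). \<epsilon> * f t) (map (\<lambda>(\<epsilon>,t). (-\<epsilon>,t)) xs)) = - sum_list (map (\<lambda>(\<epsilon>,t). \<epsilon> * (f t::'a::field)) xs)"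
  by (induction xs) auto

lemma list_to_fun:
  assumes "length F = N" "\<forall>(\<epsilon>,t)\<in>set F. (\<epsilon>=1 \<or> \<epsilon>=-1) \<and> t \<noteq> (0::'a::field)"
    "y = sum_list (map (\<lambda>(\<epsilon>,t). \<epsilon> * f t) F)"
  shows "\<exists>a \<epsilon> :: nat \<Rightarrow> 'a. (\<forall>i<N. a i \<noteq> 0 \<and> (\<epsilon> i = 1 \<or> \<epsilon> i = -1)) \<and> y = (\<Sum>i<N. \<epsilon> i * f (a i))"
proof (intro exI conjI)
  show "\<forall>i<N. snd (F!i) \<noteq> 0 \<and> (fst (F!i) = 1 \<or> fst (F!i) = -1)"
  proof clarify
    fix i assume "i < N"
    hence "F!i \<in> set F" using assms(1) by simp
    moreover obtain e t where et: "F!i = (e,t)" by (cases "F!i")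
    ultimately have "(e=1 \<or> e=-1) \<and> t \<noteq> 0" using assms(2) by fastforce
    thus "snd (F!i) \<noteq> 0 \<and> (fst (F!i) = 1 \<or> fst (F!i) = -1)" using et by simp
  qed
  have "y = sum_list (map (\<lambda>(\<epsilon>,t). \<epsilon> * f t) F)" by fact
  also have "\<dots> = (\<Sum>i=0..<length F. (map (\<lambda>(\<epsilon>,t). \<epsilon> * f t) F) ! i)"
    by (subst sum_list_sum_nth) simp
  also have "\<dots> = (\<Sum>i<N. fst (F!i) * f (snd (F!i)))"
    using assms(1) by (auto simp: atLeast0LessThan case_prod_unfold intro!: sum.cong)
  finally show "y = (\<Sum>i<N. fst (F!i) * f (snd (F!i)))" .
qed

lemma main_pos:
  fixes c :: "int \<Rightarrow> 'a::field_char_0"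
  assumes fin: "laurent_poly c" and cn0: "c n0 \<noteq> 0" and n0: "n0 > 0"
  shows "\<exists>N::nat. N > 0 \<and> (\<forall>y::'a. \<exists>a \<epsilon> :: nat \<Rightarrow> 'a.
           (\<forall>i<N. a i \<noteq> 0 \<and> (\<epsilon> i = 1 \<or> \<epsilon> i = -1)) \<and>
           y = (\<Sum>i<N. \<epsilon> i * laurent_eval c (a i)))"
proof -
  let ?U = "{n. c n \<noteq> 0}"
  have finU: "finite ?U" using fin by (simp add: laurent_poly_def)
  obtain L :: "('a \<times> 'a) list" where L: "\<forall>(e,l)\<in>set L. (e=1 \<or> e=-1) \<and> l \<noteq> 0"
     "\<forall>k\<in>?U - {n0}. coefA L k = 0" "\<forall>k. k \<notin> ?U - {n0} \<longrightarrow> coefA L k \<noteq> 0"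
    using exists_L[of "?U - {n0}"] finU by blast
  define C where "C = c n0 * coefA L n0"
  have C0: "C \<noteq> 0" using L(3) cn0 by (simp add: C_def)
  define d where "d = nat n0"
  have d1: "d \<ge> 1" using n0 by (simp add: d_def)
  have g: "combA L (laurent_eval c) x = poly (monom C d) x" for x
  proof -
    have "combA L (laurent_eval c) x = (\<Sum>n\<in>?U. c n * coefA L n * x powi n)" by (rule combA_laurent)
    also have "\<dots> = c n0 * coefA L n0 * x powi n0 + (\<Sum>n\<in>?U - {n0}. c n * coefA L n * x powi n)"
      using finU cn0 by (subst sum.remove[of _ n0]) auto
    also have "(\<Sum>n\<in>?U - {n0}. c n * coefA L n * x powi n) = 0" using L(2) by simp
    also have "x powi n0 = x ^ d" using n0 unfolding d_def by (metis power_int_of_nat int_nat_eq less_le)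
    finally show ?thesis by (simp add: C_def poly_monom)
  qed
  have "degree (monom C d) \<ge> 1" using C0 d1 by (simp add: degree_monom_eq)
  then obtain M a b where M: "\<forall>(e,b)\<in>set M. e=1 \<or> e=-1" "a \<noteq> 0" "\<forall>x. combB M (poly (monom C d)) x = a*x+b"
    using exists_M by blast
  have gfun: "combA L (laurent_eval c) = poly (monom C d)" using g by auto
  have val: "sum_list (map (\<lambda>(\<epsilon>,t). \<epsilon> * laurent_eval c t) (PL M L x)) = a*x+b" for x
    using M(3) expand[of M L "laurent_eval c" x] gfun by simp
  define N where "N = 2 * (length M * length L)"
  have rep: "\<forall>y::'a. \<exists>a \<epsilon> :: nat \<Rightarrow> 'a.
           (\<forall>i<N. a i \<noteq> 0 \<and> (\<epsilon> i = 1 \<or> \<epsilon> i = -1)) \<and>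
           y = (\<Sum>i<N. \<epsilon> i * laurent_eval c (a i))"
  proof
    fix y :: 'a
    let ?A = "(\<lambda>b. - b) ` snd ` set M \<union> (\<lambda>b. y/a - b) ` snd ` set M"
    have "finite ?A" by simp
    then obtain x1 where x1: "x1 \<notin> ?A" using ex_new_if_finite[OF infinite_UNIV_char_0] by blast
    define x2 where "x2 = x1 - y/a"
    have nz1: "\<forall>(e,b)\<in>set M. x1 + b \<noteq> 0"
    proof clarify
      fix e b assume "(e,b) \<in> set M" "x1 + b = 0"
      hence "x1 \<in> (\<lambda>b. - b) ` snd ` set M" by (force simp: eq_neg_iff_add_eq_0)
      thus False using x1 by blast
    qed
    have nz2: "\<forall>(e,b)\<in>set M. x2 + b \<noteq> 0"
    proof clarify
      fix e b assume "(e,b) \<in> set M" "x2 + b = 0"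
      hence "x1 = y/a - b" by (simp add: x2_def algebra_simps)
      hence "x1 \<in> (\<lambda>b. y/a - b) ` snd ` set M" using \<open>(e,b) \<in> set M\<close> by force
      thus False using x1 by blast
    qed
    define F where "F = PL M L x1 @ map (\<lambda>(\<epsilon>,t). (-\<epsilon>,t)) (PL M L x2)"
    have "length F = N" by (simp add: F_def N_def PL_length)
    moreover have "\<forall>(\<epsilon>,t)\<in>set F. (\<epsilon>=1 \<or> \<epsilon>=-1) \<and> t \<noteq> 0"
      using PL_set[OF M(1) L(1) nz1] PL_set[OF M(1) L(1) nz2] unfolding F_def by fastforce
    moreover have "y = sum_list (map (\<lambda>(\<epsilon>,t). \<epsilon> * laurent_eval c t) F)"
      using M(2) unfolding F_def map_append sum_list_append neg_sum val x2_def by (simp add: algebra_simps)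
    ultimately show "\<exists>a \<epsilon> :: nat \<Rightarrow> 'a. (\<forall>i<N. a i \<noteq> 0 \<and> (\<epsilon> i = 1 \<or> \<epsilon> i = -1)) \<and>
           y = (\<Sum>i<N. \<epsilon> i * laurent_eval c (a i))" by (rule list_to_fun)
  qed
  have "N > 0"
  proof (rule ccontr)
    assume "\<not> N > 0"
    hence "N = 0" by simp
    hence "\<forall>y::'a. y = 0" using rep by auto
    thus False by (metis zero_neq_one)
  qed
  with rep show ?thesis by blast
qed

lemma laurent_neg:
  fixes c :: "int \<Rightarrow> 'a::field"
  shows "laurent_eval (\<lambda>n. c (-n)) x = laurent_eval c (inverse x)"
proof -
  have U: "{n. c (-n) \<noteq> 0} = uminus ` {n. c n \<noteq> 0}" by force
  have "laurent_eval (\<lambda>n. c (-n)) x = (\<Sum>n\<in>uminus ` {n. c n \<noteq> 0}. c (-n) * x powi n)"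
    unfolding laurent_eval_def U ..
  also have "\<dots> = (\<Sum>m\<in>{n. c n \<noteq> 0}. c m * x powi (-m))"
    by (subst sum.reindex) (auto simp: inj_on_def)
  also have "\<dots> = laurent_eval c (inverse x)"
    unfolding laurent_eval_def by (simp add: power_int_minus power_int_inverse)
  finally show ?thesis .
qed

theorem theorem3p1:
  fixes c :: "int \<Rightarrow> 'a::field_char_0"
  assumes "laurent_poly c" and "laurent_nonconst c"
  shows "\<exists>N::nat. N > 0 \<and> (\<forall>y::'a. \<exists>a \<epsilon> :: nat \<Rightarrow> 'a.
           (\<forall>i<N. a i \<noteq> 0 \<and> (\<epsilon> i = 1 \<or> \<epsilon> i = -1)) \<and>
           y = (\<Sum>i<N. \<epsilon> i * laurent_eval c (a i)))"
proof -
  obtain n where n: "n \<noteq> 0" "c n \<noteq> 0" using assms(2) by (auto simp: laurent_nonconst_def)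
  show ?thesis
  proof (cases "n > 0")
    case True
    thus ?thesis using main_pos[OF assms(1) n(2)] by blast
  next
    case False
    let ?c = "\<lambda>m. c (-m)"
    have fin: "laurent_poly ?c"
    proof -
      have "{m. c (-m) \<noteq> 0} = uminus ` {m. c m \<noteq> 0}" by force
      thus ?thesis using assms(1) by (simp add: laurent_poly_def)
    qed
    have "?c (-n) \<noteq> 0" "-n > 0" using n False by auto
    from main_pos[OF fin this] obtain N where N: "N > 0" "\<forall>y::'a. \<exists>a \<epsilon> :: nat \<Rightarrow> 'a.
           (\<forall>i<N. a i \<noteq> 0 \<and> (\<epsilon> i = 1 \<or> \<epsilon> i = -1)) \<and>
           y = (\<Sum>i<N. \<epsilon> i * laurent_eval ?c (a i))" by blast
    have "\<forall>y::'a. \<exists>a \<epsilon> :: nat \<Rightarrow> 'a. (\<forall>i<N. a i \<noteq> 0 \<and> (\<epsilon> i = 1 \<or> \<epsilon> i = -1)) \<and>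
           y = (\<Sum>i<N. \<epsilon> i * laurent_eval c (a i))"
    proof
      fix y :: 'a
      obtain a \<epsilon> where ae: "\<forall>i<N. a i \<noteq> 0 \<and> (\<epsilon> i = 1 \<or> \<epsilon> i = -1)"
        "y = (\<Sum>i<N. \<epsilon> i * laurent_eval ?c (a i))" using N(2) by blast
      show "\<exists>a \<epsilon> :: nat \<Rightarrow> 'a. (\<forall>i<N. a i \<noteq> 0 \<and> (\<epsilon> i = 1 \<or> \<epsilon> i = -1)) \<and>
           y = (\<Sum>i<N. \<epsilon> i * laurent_eval c (a i))"
      proof -
        have h1: "\<forall>i<N. inverse (a i) \<noteq> 0 \<and> (\<epsilon> i = 1 \<or> \<epsilon> i = -1)" using ae(1) by simp
        have h2: "y = (\<Sum>i<N. \<epsilon> i * laurent_eval c (inverse (a i)))" using ae(2) by (simp add: laurent_neg)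
        show ?thesis by (rule exI[where x="\<lambda>i. inverse (a i)"], rule exI[where x=\<epsilon>], rule conjI[OF h1 h2])
      qed
    qed
    thus ?thesis using N(1) by blast
  qed
qed

end
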